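(* Let $W_0,W_1,W_2,\dots$ be the words over the alphabet $\{c_0,c_1,c_2,c_3\}$ defined by $W_k=c_k$ for $k=0,1,2,3$ and, recursively, $W_{2n+2}=W_0W_1W_2\cdots W_{2n}$ for $n\ge1$ and $W_{2n+1}=W_{2n-1}W_{2n-2}W_{2n-1}$ for $n\ge2$. Let $\sigma$ be the morphism $\sigma(c_0)=c_0c_1$, $\sigma(c_1)=c_2c_3$, $\sigma(c_2)=c_0c_1c_2$, $\sigma(c_3)=c_3c_2c_3$. Then for each $n\ge0$, $W_{2n+2}=\sigma^n(c_2)$ and $W_{2n+3}=\sigma^n(c_3)$.
   Context: In the paper, $W_k$ is the coding $\Psi(\Lambda_k)$ of the Lucas interval $\Lambda_k$ (where $\Lambda_0=[0,1]$, $\Lambda_{2n}=[L_{2n},L_{2n+1}]$, $\Lambda_{2n+1}=[L_{2n+1}+1,L_{2n+2}-1]$ for $n\ge1$, with Lucas numbers $L_0=2$, $L_1=1$, $L_n=L_{n-1}+L_{n-2}$); the statement above only depends on the recursive definition of the words. Juxtaposition denotes concatenation of words. *)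

theory Defs
  imports Main
begin

datatype letter = c0 | c1 | c2 | c3

function W :: "nat \<Rightarrow> letter list" where
  "W k = (if k = 0 then [c0] else if k = 1 then [c1] else if k = 2 then [c2]
          else if k = 3 then [c3]
          else if even k then concat (map (\<lambda>i. W i) [0..<k - 1])
          else W (k - 2) @ W (k - 3) @ W (k - 2))"
  by auto
termination
  by (relation "measure id") auto

declare W.simps [simp del]

fun sigma_letter :: "letter \<Rightarrow> letter list" where
  "sigma_letter c0 = [c0, c1]"
| "sigma_letter c1 = [c2, c3]"
| "sigma_letter c2 = [c0, c1, c2]"
| "sigma_letter c3 = [c3, c2, c3]"

definition sigma :: "letter list \<Rightarrow> letter list" where
  "sigma w = concat (map sigma_letter w)"

end

theory Submission
  imports Defs
begin

lemma sigma_append[simp]: "sigma (xs @ ys) = sigma xs @ sigma ys"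
  by (simp add: sigma_def)

lemma sigma_single[simp]: "sigma [x] = sigma_letter x"
  by (simp add: sigma_def)

lemma sigma_concat: "sigma (concat xss) = concat (map sigma xss)"
  by (induction xss) (simp_all add: sigma_def)

lemma map_shift: "map (\<lambda>i. i + n) [a..<b] = [a+n..<b+n]"
  by (induction b) auto

lemma W_small: "W 0 = [c0]" "W 1 = [c1]" "W 2 = [c2]" "W 3 = [c3]"
  by (simp_all add: W.simps)

lemma W_small': "W (Suc 0) = [c1]" "W (Suc (Suc 0)) = [c2]" "W (Suc (Suc (Suc 0))) = [c3]"
  using W_small by (simp_all add: numeral_eq_Suc)

lemma W_even: "k \<ge> 4 \<Longrightarrow> even k \<Longrightarrow> W k = concat (map W [0..<k - 1])"
  by (subst W.simps) auto

lemma W_odd: "k \<ge> 4 \<Longrightarrow> odd k \<Longrightarrow> W k = W (k - 2) @ W (k - 3) @ W (k - 2)"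
  by (subst W.simps) auto

lemma W4: "W 4 = [c0,c1,c2]"
  using W_even[of 4] by (simp add: W_small W_small' upt_rec)

lemma W5: "W 5 = [c3,c2,c3]"
  using W_odd[of 5] by (simp add: W_small)

lemma sigma_W: "k \<ge> 2 \<Longrightarrow> sigma (W k) = W (k + 2)"
proof (induction k rule: less_induct)
  case (less k)
  show ?case
  proof (cases "k = 2 \<or> k = 3")
    case True
    then show ?thesis
    proof
      assume "k = 2" then show ?thesis by (simp add: W_small W4 sigma_def)
    next
      assume "k = 3" then show ?thesis by (simp add: W_small W5 sigma_def)
    qed
  next
    case False
    with less.prems have k4: "k \<ge> 4" by auto
    show ?thesis
    proof (cases "even k")
      case True
      have "map (\<lambda>i. sigma (W i)) [2..<k-1] = map (\<lambda>i. W (i+2)) [2..<k-1]"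
        using less.IH k4 by (intro map_cong) auto
      also have "\<dots> = map W (map (\<lambda>i. i+2) [2..<k-1])" by (simp only: map_map comp_def)
      also have "\<dots> = map W [4..<k+1]" using k4 by (simp only: map_shift) simp
      finally have A: "map (\<lambda>i. sigma (W i)) [2..<k-1] = map W [4..<k+1]" .
      have e1: "k - 1 = 2 + (k-3)" using k4 by simp
      have u1': "[0..<k-1] = [0..<2] @ [2..<k-1]" unfolding e1
        by (rule upt_add_eq_append) simp
      have u1: "[0..<k-1] = [0,1] @ [2..<k-1]" unfolding u1' by (simp add: upt_rec)
      have e2: "k + 1 = 4 + (k-3)" using k4 by simp
      have u2': "[0..<k+1] = [0..<4] @ [4..<k+1]" unfolding e2
        by (rule upt_add_eq_append) simp
      have u2: "[0..<k+1] = [0,1,2,3] @ [4..<k+1]" unfolding u2' by (simp add: upt_rec)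
      have "sigma (W k) = concat (map (\<lambda>i. sigma (W i)) [0..<k-1])"
        using W_even[OF k4 True] by (simp add: sigma_concat comp_def)
      also have "\<dots> = [c0,c1,c2,c3] @ concat (map W [4..<k+1])"
        unfolding u1 map_append concat_append A by (simp add: W_small W_small')
      also have "\<dots> = W (k+2)"
        using W_even[of "k+2"] k4 True u2 by (simp add: W_small W_small')
      finally show ?thesis .
    next
      case False
      have k5: "k \<ge> 5" using k4 False by presburger
      have "k - 2 + 2 = k" using k5 by simp
      then have I1: "sigma (W (k-2)) = W k" using less.IH[of "k-2"] k5 by simp
      have "k - 3 + 2 = k - 1" using k5 by simp
      then have I2: "sigma (W (k-3)) = W (k-1)" using less.IH[of "k-3"] k5
        by simp
      have "sigma (W k) = W k @ W (k-1) @ W k"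
        unfolding W_odd[OF k4 False] sigma_append I1 I2 ..
      also have "\<dots> = W (k+2)" using W_odd[of "k+2"] k4 False by simp
      finally show ?thesis .
    qed
  qed
qed

theorem lemma4:
  fixes n :: nat
  shows "W (2 * n + 2) = (sigma ^^ n) [c2] \<and> W (2 * n + 3) = (sigma ^^ n) [c3]"
proof (induction n)
  case 0
  show ?case using W_small W_small' by simp
next
  case (Suc n)
  have "W (2 * Suc n + 2) = sigma (W (2*n+2))" using sigma_W[of "2*n+2"] by simp
  moreover have "W (2 * Suc n + 3) = sigma (W (2*n+3))" using sigma_W[of "2*n+3"] by simp
  ultimately show ?case using Suc by simp
qed

end
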